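(* For a regular language $L\subseteq\Sigma^*$, the following three conditions are equivalent: (A) the syntactic monoid $M$ of $L$ satisfies $yx^{\omega+1}=x^{\omega+1}y$ for all $x,y\in M$, and for all words $x,y,z\in\Sigma^*$ and every non-neutral letter $a$, if $y\in L$ then $xyza^\omega\in L$; (B) there is $p\in\mathbb{N}$ such that for every word $u\in\Sigma^*$, letting $T$ be the set of non-neutral letters $a$ with $|u|_a\ge p$, either $T=\emptyset$ or ($u_{-T}\in \mathrm{Cond}(T)$ iff $u\in L$); (C) there is $p\in\mathbb{N}$ such that for all words $u,v\in\Sigma^*$, letting $T$ be the set of non-neutral letters $a$ with $|u|_a\ge p$, if $v\in L$, $T\neq\emptyset$ and $v_{-T}$ is a factor of $u_{-T}$, then $u\in L$.
   Context: $\Sigma$ is a finite alphabet. A letter $e$ is neutral for $L$ if for all $s,t\in\Sigma^*$, $st\in L$ iff $set\in L$; "non-neutral" means not neutral for $L$. $|u|_a$ is the number of occurrences of $a$ in $u$. $u$ is a factor of $v$ if $v=sut$ for some words $s,t$. For $S\subseteq\Sigma$, $u_{-S}$ is the word obtained from $u$ by deleting all letters of $S$. For a non-empty set $S$ of non-neutral letters, $\mathrm{Cond}(S)$ is the set of words $u\in\Sigma^*$ for which there is $v\in L$ such that $v_{-S}$ is a factor of $u_{-S}$. The syntactic monoid $M$ of $L$ is $\Sigma^*$ quotiented by the congruence $u\sim_L v$ iff ($sut\in L\Leftrightarrow svt\in L$ for all $s,t\in\Sigma^*$); $\omega$ is its idempotent power ($x^\omega x^\omega=x^\omega$ for all $x\in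 M$), and $a^\omega$ denotes the letter $a$ repeated $\omega$ times. *)

theory Defs
  imports Main
begin

definition regular :: "'a list set \<Rightarrow> bool" where
  "regular L \<longleftrightarrow> (\<exists>(Q::nat set) q0 (\<delta>::nat \<Rightarrow> 'a \<Rightarrow> nat) F.
      finite Q \<and> q0 \<in> Q \<and> F \<subseteq> Q \<and> (\<forall>q\<in>Q. \<forall>c. \<delta> q c \<in> Q) \<and>
      L = {w. foldl \<delta> q0 w \<in> F})"

definition syn_equiv :: "'a list set \<Rightarrow> 'a list \<Rightarrow> 'a list \<Rightarrow> bool" where
  "syn_equiv L u v \<longleftrightarrow> (\<forall>s t. s @ u @ t \<in> L \<longleftrightarrow> s @ v @ t \<in> L)"

definition wpow :: "'a list \<Rightarrow> nat \<Rightarrow> 'a list" where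
  "wpow u n = concat (replicate n u)"

text \<open>The idempotent power omega of the syntactic monoid: a positive exponent n
  with x^n x^n ~ x^n for every element x (exists since M is finite for regular L).\<close>
definition syn_omega :: "'a list set \<Rightarrow> nat" where
  "syn_omega L = (SOME n. 0 < n \<and> (\<forall>x. syn_equiv L (wpow x n @ wpow x n) (wpow x n)))"

definition neutral :: "'a list set \<Rightarrow> 'a \<Rightarrow> bool" where
  "neutral L e \<longleftrightarrow> (\<forall>s t. s @ t \<in> L \<longleftrightarrow> s @ [e] @ t \<in> L)"

definition factor :: "'a list \<Rightarrow> 'a list \<Rightarrow> bool" where
  "factor u v \<longleftrightarrow> (\<exists>s t. v = s @ u @ t)"

definition erase :: "'a set \<Rightarrow> 'a list \<Rightarrow> 'a list" where
  "erase S u = filter (\<lambda>c. c \<notin> S) u"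

definition Cond :: "'a list set \<Rightarrow> 'a set \<Rightarrow> 'a list set" where
  "Cond L S = {u. \<exists>v\<in>L. factor (erase S v) (erase S u)}"

end

theory Submission
  imports Defs "HOL-Library.FuncSet"
begin


lemma se_refl[simp]: "syn_equiv L u u"
  by (simp add: syn_equiv_def)

lemma se_sym: "syn_equiv L u v \<Longrightarrow> syn_equiv L v u"
  by (simp add: syn_equiv_def)

lemma se_trans[trans]: "syn_equiv L u v \<Longrightarrow> syn_equiv L v x \<Longrightarrow> syn_equiv L u x"
  by (simp add: syn_equiv_def)

lemma se_cong: "syn_equiv L u v \<Longrightarrow> syn_equiv L (s@u@t) (s@v@t)"
  unfolding syn_equiv_def
proof (intro allI)
  fix s' t'
  assume h: "\<forall>s t. s @ u @ t \<in> L \<longleftrightarrow> s @ v @ t \<in> L"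
  show "s' @ (s @ u @ t) @ t' \<in> L \<longleftrightarrow> s' @ (s @ v @ t) @ t' \<in> L"
    using h[rule_format, of "s'@s" "t@t'"] by simp
qed

lemma se_appL: "syn_equiv L u u' \<Longrightarrow> syn_equiv L (u@v) (u'@v)"
  using se_cong[of L u u' "[]" v] by simp

lemma se_appR: "syn_equiv L v v' \<Longrightarrow> syn_equiv L (u@v) (u@v')"
  using se_cong[of L v v' u "[]"] by simp

lemma se_app: "syn_equiv L u u' \<Longrightarrow> syn_equiv L v v' \<Longrightarrow> syn_equiv L (u@v) (u'@v')"
  by (meson se_appL se_appR se_trans)

lemma se_mem: "syn_equiv L u v \<Longrightarrow> u \<in> L \<longleftrightarrow> v \<in> L"
  unfolding syn_equiv_def by (metis append.left_neutral append_Nil2)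

lemma wpow_0[simp]: "wpow x 0 = []"
  by (simp add: wpow_def)

lemma wpow_Suc: "wpow x (Suc n) = x @ wpow x n"
  by (simp add: wpow_def)

lemma wpow_add: "wpow x (m + n) = wpow x m @ wpow x n"
  by (simp add: wpow_def replicate_add)

lemma wpow_Suc': "wpow x (Suc n) = wpow x n @ x"
  using wpow_add[of x n 1] by (simp add: wpow_Suc)

lemma wpow_mult: "wpow x (m * n) = wpow (wpow x m) n"
  by (induction n) (simp_all add: wpow_Suc wpow_add)

lemma wpow_1[simp]: "wpow x 1 = x"
  by (simp add: wpow_def)

lemma rep_wpow: "replicate n a = wpow [a] n"
  by (induction n) (simp_all add: wpow_Suc)

lemma count_wpow: "count_list (wpow x n) a = n * count_list x a"
  by (induction n) (simp_all add: wpow_Suc)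

lemma set_wpow0: "set (wpow x n) = (if n = 0 then {} else set x)"
  by (induction n) (auto simp: wpow_Suc)

lemma set_wpow: "0 < n \<Longrightarrow> set (wpow x n) = set x"
  by (simp add: set_wpow0)

lemma erase_append[simp]: "erase S (u @ v) = erase S u @ erase S v"
  by (simp add: erase_def)

lemma erase_Nil[simp]: "erase S [] = []"
  by (simp add: erase_def)

lemma erase_Cons: "erase S (c # u) = (if c \<in> S then erase S u else c # erase S u)"
  by (simp add: erase_def)

lemma erase_erase: "erase S (erase T u) = erase (S \<union> T) u"
  by (simp add: erase_def) (metis Un_iff)

lemma set_erase: "set (erase S u) = set u - S"
  by (auto simp: erase_def)

lemma erase_id: "set u \<inter> S = {} \<Longrightarrow> erase S u = u"
  by (auto simp: erase_def intro: filter_True)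

lemma count_erase: "c \<notin> S \<Longrightarrow> count_list (erase S u) c = count_list u c"
  by (induction u) (auto simp: erase_Cons)

lemma wpow_idem_gen: "syn_equiv L (e @ e) e \<Longrightarrow> 0 < k \<Longrightarrow> syn_equiv L (wpow e k) e"
proof (induction k)
  case 0 then show ?case by simp
next
  case (Suc k)
  show ?case
  proof (cases "k = 0")
    case True then show ?thesis by (simp add: wpow_Suc)
  next
    case False
    then have "syn_equiv L (wpow e k) e" using Suc by simp
    then have "syn_equiv L (e @ wpow e k) (e @ e)" by (rule se_appR)
    then show ?thesis unfolding wpow_Suc using Suc.prems(1) se_trans by blast
  qed
qed

lemma neutral_erase: "s @ u \<in> L \<longleftrightarrow> s @ erase {e. neutral L e} u \<in> L"
proof (induction u arbitrary: s)
  case Nil then show ?case by simp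
next
  case (Cons c u)
  show ?case
  proof (cases "neutral L c")
    case True
    then have "s @ c # u \<in> L \<longleftrightarrow> s @ u \<in> L"
      unfolding neutral_def by simp
    then show ?thesis using Cons[of s] True by (simp add: erase_Cons)
  next
    case False
    then show ?thesis using Cons[of "s @ [c]"] by (simp add: erase_Cons)
  qed
qed

lemma neutral_erase0: "u \<in> L \<longleftrightarrow> erase {e. neutral L e} u \<in> L"
  using neutral_erase[of "[]" u L] by simp



locale dfa =
  fixes Q :: "nat set" and q0 :: nat and dl :: "nat \<Rightarrow> 'a \<Rightarrow> nat" and Fa :: "nat set"
    and L :: "'a list set"
  assumes finQ: "finite Q" and q0Q: "q0 \<in> Q" and FQ: "Fa \<subseteq> Q"
    and clos: "\<forall>q\<in>Q. \<forall>c. dl q c \<in> Q" and Ldef: "L = {w. foldl dl q0 w \<in> Fa}"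
begin

definition fx :: "'a list \<Rightarrow> nat \<Rightarrow> nat" where
  "fx u = restrict (\<lambda>q. foldl dl q u) Q"

abbreviation "Fs \<equiv> PiE Q (\<lambda>_. Q)"

lemma fold_in: "q \<in> Q \<Longrightarrow> foldl dl q u \<in> Q"
  using clos by (induction u arbitrary: q) auto

lemma fx_in: "fx u \<in> Fs"
  unfolding fx_def using fold_in by auto

lemma finFs: "finite Fs"
  using finQ by (intro finite_PiE) auto

lemma fx_eqD: "fx u = fx v \<Longrightarrow> q \<in> Q \<Longrightarrow> foldl dl q u = foldl dl q v"
  unfolding fx_def by (metis restrict_apply')

lemma fx_appR: "fx u = fx v \<Longrightarrow> fx (u @ w) = fx (v @ w)"
proof -
  assume h: "fx u = fx v"
  show ?thesis unfolding fx_def restrict_def fun_eq_iff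
    using fx_eqD[OF h] by simp
qed

lemma fx_appL: "fx u = fx v \<Longrightarrow> fx (w @ u) = fx (w @ v)"
proof -
  assume h: "fx u = fx v"
  show ?thesis unfolding fx_def restrict_def fun_eq_iff
    using fx_eqD[OF h] fold_in by simp
qed

lemma fx_se: "fx u = fx v \<Longrightarrow> syn_equiv L u v"
  unfolding syn_equiv_def Ldef
proof (intro allI)
  fix s t assume h: "fx u = fx v"
  have "foldl dl q0 (s @ u @ t) = foldl dl q0 (s @ v @ t)"
    using fx_eqD[OF h fold_in[OF q0Q, of s]] by simp
  then show "(s @ u @ t \<in> {w. foldl dl q0 w \<in> Fa}) = (s @ v @ t \<in> {w. foldl dl q0 w \<in> Fa})"
    by simp
qed

lemma omega_exists: "\<exists>n>0. \<forall>x. syn_equiv L (wpow x n @ wpow x n) (wpow x n)"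
proof -
  define K where "K = card Fs"
  have "restrict (\<lambda>q. q) Q \<in> Fs" by auto
  then have K1: "1 \<le> K" unfolding K_def using finFs
    by (metis One_nat_def Suc_leI card_gt_0_iff empty_iff)
  define n :: nat where "n = fact K"
  have npos: "0 < n" unfolding n_def by simp
  have nK: "K \<le> n" unfolding n_def by (rule fact_ge_self)
  have "syn_equiv L (wpow x n @ wpow x n) (wpow x n)" for x
  proof -
    define g where "g i = fx (wpow x i)" for i
    have "\<not> inj_on g {0..K}"
    proof
      assume "inj_on g {0..K}"
      moreover have "g ` {0..K} \<subseteq> Fs" unfolding g_def using fx_in by auto
      ultimately have "card {0..K} \<le> card Fs" using card_inj_on_le finFs by blast
      then show False unfolding K_def by simp
    qed
    then obtain i j where ij: "i \<in> {0..K}" "j \<in> {0..K}" "i \<noteq> j" "g i = g j"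
      unfolding inj_on_def by blast
    then obtain i j where ij: "i < j" "j \<le> K" "g i = g j"
      by (metis atLeastAtMost_iff linorder_neq_iff)
    define d where "d = j - i"
    have dpos: "0 < d" "d \<le> K" using ij unfolding d_def by auto
    have per1: "g (i + r + d) = g (i + r)" for r
    proof -
      have "g (i + r + d) = fx (wpow x j @ wpow x r)"
        unfolding g_def d_def using ij by (simp add: wpow_add[symmetric] add.commute add.left_commute)
      also have "\<dots> = fx (wpow x i @ wpow x r)"
        using fx_appR ij(3) unfolding g_def by metis
      finally show ?thesis unfolding g_def by (simp add: wpow_add)
    qed
    have per: "g (i + r + t * d) = g (i + r)" for r t
    proof (induction t)
      case 0 then show ?case by simp
    next
      case (Suc t)
      have "g (i + r + Suc t * d) = g (i + (r + t * d) + d)" by (simp add: algebra_simps)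
      also have "\<dots> = g (i + (r + t * d))" by (rule per1)
      finally show ?case using Suc by (simp add: algebra_simps)
    qed
    have "d dvd n" unfolding n_def using dpos by (intro dvd_fact) auto
    then obtain t where t: "n = t * d" by (metis dvd_def mult.commute)
    have "g (n + n) = g (i + (n - i) + t * d)" using t ij nK by simp
    also have "\<dots> = g (i + (n - i))" by (rule per)
    also have "\<dots> = g n" using ij nK by simp
    finally have "fx (wpow x n @ wpow x n) = fx (wpow x n)" unfolding g_def by (simp add: wpow_add)
    then show ?thesis by (rule fx_se)
  qed
  then show ?thesis using npos by blast
qed

lemma pump:
  assumes "card Fs < count_list u a"
  shows "\<exists>P k R. u = P @ (a # k) @ R \<and> syn_equiv L P (P @ a # k)"
proof -
  define I where "I = {i. i < length u \<and> a = u ! i}"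
  have cI: "card I = count_list u a"
    unfolding I_def count_list_eq_length_filter length_filter_conv_card by simp
  define h where "h i = fx (take i u)" for i
  have "\<not> inj_on h I"
  proof
    assume "inj_on h I"
    moreover have "h ` I \<subseteq> Fs" unfolding h_def using fx_in by auto
    ultimately have "card I \<le> card Fs" using card_inj_on_le finFs by blast
    then show False using cI assms by simp
  qed
  then obtain i j where ij0: "i \<in> I" "j \<in> I" "i \<noteq> j" "h i = h j"
    unfolding inj_on_def by blast
  then obtain i j where ij: "i \<in> I" "j \<in> I" "i < j" "h i = h j"
    by (metis linorder_neq_iff)
  define P where "P = take i u"
  define k where "k = take (j - i - 1) (drop (Suc i) u)"
  define R where "R = drop j u"
  have ui: "u ! i = a" "i < length u" "j \<le> length u" using ij unfolding I_def by auto
  have d: "drop i u = a # drop (Suc i) u" using ui by (metis Cons_nth_drop_Suc)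
  have tk: "take (j - i) (drop i u) = a # k" unfolding k_def d using ij
    by (metis Suc_diff_Suc diff_Suc_1 take_Suc_Cons)
  have Pj: "P @ a # k = take j u"
    unfolding P_def tk[symmetric] using ij take_add[of i "j - i" u] by simp
  have "u = P @ (a # k) @ R"
    using Pj unfolding R_def by (metis append.assoc append_take_drop_id)
  moreover have "syn_equiv L P (P @ a # k)"
    using ij(4) Pj unfolding h_def P_def by (metis fx_se)
  ultimately show ?thesis by blast
qed

end

lemma regular_dfa:
  assumes "regular L"
  shows "\<exists>Q q0 dl Fa. dfa Q q0 dl Fa L"
  using assms unfolding regular_def dfa_def by blast

lemma omega_props:
  assumes "regular L"
  shows "0 < syn_omega L" "syn_equiv L (wpow x (syn_omega L) @ wpow x (syn_omega L)) (wpow x (syn_omega L))"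
proof -
  obtain Q q0 dl Fa where "dfa Q q0 dl Fa L" using regular_dfa[OF assms] by blast
  then have ex: "\<exists>n. 0 < n \<and> (\<forall>x. syn_equiv L (wpow x n @ wpow x n) (wpow x n))"
    using dfa.omega_exists by blast
  show "0 < syn_omega L" "syn_equiv L (wpow x (syn_omega L) @ wpow x (syn_omega L)) (wpow x (syn_omega L))"
    unfolding syn_omega_def using someI_ex[OF ex] by auto
qed



definition central :: "'a list set \<Rightarrow> 'a list \<Rightarrow> bool" where
  "central L c \<longleftrightarrow> (\<forall>y. syn_equiv L (y @ c) (c @ y))"

lemma centralD: "central L c \<Longrightarrow> syn_equiv L (y @ c) (c @ y)"
  by (simp add: central_def)

lemma centralD': "central L c \<Longrightarrow> syn_equiv L (c @ y) (y @ c)"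
  by (simp add: central_def se_sym)

lemma central_pow: "central L c \<Longrightarrow> central L (wpow c n)"
proof (induction n)
  case 0 then show ?case by (simp add: central_def)
next
  case (Suc n)
  show ?case unfolding central_def
  proof
    fix y
    have "syn_equiv L (y @ c @ wpow c n) (c @ y @ wpow c n)"
      using se_appL[OF centralD[OF Suc.prems, of y], of "wpow c n"] by simp
    also have "syn_equiv L (c @ y @ wpow c n) (c @ wpow c n @ y)"
      using se_appR[OF centralD[OF Suc.IH[OF Suc.prems], of y], of c] by simp
    finally show "syn_equiv L (y @ wpow c (Suc n)) (wpow c (Suc n) @ y)"
      by (simp add: wpow_Suc)
  qed
qed

lemma central_cong: "central L c \<Longrightarrow> syn_equiv L c d \<Longrightarrow> central L d"
  unfolding central_def by (meson se_appL se_appR se_sym se_trans)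

lemma rep_Suc': "replicate (Suc n) a = replicate n a @ [a]"
  by (induction n) auto

lemma rep_move: "replicate n a @ a # xs = a # replicate n a @ xs"
  by (induction n) auto

locale alg =
  fixes L :: "'a list set" and w :: nat
  assumes wpos: "0 < w"
    and idem: "\<And>x. syn_equiv L (wpow x w @ wpow x w) (wpow x w)"
    and cen: "\<And>x y. syn_equiv L (y @ wpow x (w+1)) (wpow x (w+1) @ y)"
begin

lemma pow_idem: "0 < k \<Longrightarrow> syn_equiv L (wpow x (k * w)) (wpow x w)"
  using wpow_idem_gen[OF idem[of x], of k] wpow_mult[of x w k] by (simp add: mult.commute)

lemma pow_shift: "syn_equiv L (wpow x (n + w + w * k)) (wpow x (n + w))"
proof -
  have "wpow x (n + w + w * k) = wpow x n @ wpow x (Suc k * w)"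
    by (simp add: wpow_add[symmetric] algebra_simps)
  moreover have "syn_equiv L (wpow x n @ wpow x (Suc k * w)) (wpow x n @ wpow x w)"
    by (rule se_appR, rule pow_idem) simp
  ultimately show ?thesis by (simp add: wpow_add)
qed

lemma rep_shift: "syn_equiv L (replicate (n + w + w * k) a) (replicate (n + w) a)"
  unfolding rep_wpow by (rule pow_shift)

lemma cen1: "central L (wpow x (w+1))"
  unfolding central_def using cen by blast

lemma cen_om: "central L (wpow x w)"
proof -
  have "central L (wpow (wpow x (w+1)) w)" by (rule central_pow[OF cen1])
  moreover have "wpow (wpow x (w+1)) w = wpow x ((w+1) * w)" by (rule wpow_mult[symmetric])
  moreover have "syn_equiv L (wpow x ((w+1) * w)) (wpow x w)" by (rule pow_idem) simp
  ultimately show ?thesis using central_cong by metis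
qed

lemma cen_rep: "central L (replicate w a)"
  unfolding rep_wpow by (rule cen_om)

lemma idem_rep: "syn_equiv L (replicate w a @ replicate w a) (replicate w a)"
  unfolding rep_wpow by (rule idem)

lemma absorb:
  assumes e: "e = wpow (a # k) w"
  shows "syn_equiv L (e @ replicate w a) e"
proof -
  define r where "r = k @ wpow (a # k) (w - 1)"
  have ce: "central L e" using e cen_om by simp
  have ee: "syn_equiv L (e @ e) e" using e idem by simp
  have ee': "syn_equiv L e (e @ e)" using se_sym[OF ee] .
  have ar: "[a] @ r = e" unfolding r_def e using wpos
    by (metis Suc_diff_1 append_Cons append_Nil wpow_Suc)
  have i: "syn_equiv L (e @ [a] @ r) e" using ee ar by simp
  have ii: "syn_equiv L (e @ replicate n a @ wpow r n) e" for n
  proof (induction n)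
    case 0 then show ?case by simp
  next
    case (Suc n)
    define A where "A = replicate n a"
    define B where "B = wpow r n"
    have "e @ replicate (Suc n) a @ wpow r (Suc n) = e @ A @ ([a] @ r) @ B"
      unfolding A_def B_def by (simp add: rep_Suc' wpow_Suc del: replicate_Suc)
    also have "syn_equiv L (e @ A @ ([a] @ r) @ B) ((e @ e) @ A @ ([a] @ r) @ B)"
      by (rule se_appL[OF ee'])
    also have "syn_equiv L ((e @ e) @ A @ ([a] @ r) @ B) (e @ (A @ e) @ ([a] @ r) @ B)"
      using se_cong[OF centralD'[OF ce, of A], of e "[a] @ r @ B"] by simp
    also have "syn_equiv L (e @ (A @ e) @ ([a] @ r) @ B) (e @ A @ e @ B)"
      using se_cong[OF i, of "e @ A" B] by simp
    also have "syn_equiv L (e @ A @ e @ B) ((e @ e) @ A @ B)"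
      using se_cong[OF centralD[OF ce, of A], of e B] by simp
    also have "syn_equiv L ((e @ e) @ A @ B) (e @ A @ B)"
      by (rule se_appL[OF ee])
    also have "syn_equiv L (e @ A @ B) e" using Suc unfolding A_def B_def .
    finally show ?case .
  qed
  define R where "R = replicate w a"
  define f where "f = e @ R"
  have cR: "central L R" unfolding R_def by (rule cen_rep)
  have RR: "syn_equiv L (R @ R) R" unfolding R_def by (rule idem_rep)
  have ff: "syn_equiv L (f @ f) f"
  proof -
    have "f @ f = e @ (R @ e) @ R" unfolding f_def by simp
    also have "syn_equiv L (e @ (R @ e) @ R) ((e @ e) @ R @ R)"
      using se_cong[OF centralD[OF ce, of R], of e R] by simp
    also have "syn_equiv L ((e @ e) @ R @ R) (e @ R @ R)" by (rule se_appL[OF ee])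
    also have "syn_equiv L (e @ R @ R) (e @ R)" using se_appR[OF RR, of e] by simp
    finally show ?thesis unfolding f_def .
  qed
  have fe: "syn_equiv L f (f @ e)"
  proof -
    have "f @ e = e @ (R @ e)" unfolding f_def by simp
    also have "syn_equiv L (e @ (R @ e)) ((e @ e) @ R)"
      using se_appR[OF centralD[OF ce, of R], of e] by simp
    also have "syn_equiv L ((e @ e) @ R) f" unfolding f_def by (rule se_appL[OF ee])
    finally show ?thesis by (rule se_sym)
  qed
  have "syn_equiv L (f @ e) (f @ (e @ R @ wpow r w))"
    by (rule se_appR, rule se_sym) (use ii[of w] R_def in simp)
  also have "f @ (e @ R @ wpow r w) = (f @ f) @ wpow r w" unfolding f_def by simp
  also have "syn_equiv L ((f @ f) @ wpow r w) (f @ wpow r w)" by (rule se_appL[OF ff])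
  also have "syn_equiv L (f @ wpow r w) e" using ii[of w] unfolding f_def R_def by simp
  finally show ?thesis using fe se_trans unfolding f_def R_def by blast
qed

lemma absorb_pump:
  assumes u: "u = P @ (a # k) @ R0" and P: "syn_equiv L P (P @ a # k)"
  shows "syn_equiv L (u @ replicate w a) u"
proof -
  define g where "g = a # k"
  define e where "e = wpow g w"
  have ce: "central L e" unfolding e_def by (rule cen_om)
  have Pn: "syn_equiv L P (P @ wpow g n)" for n
  proof (induction n)
    case 0 then show ?case by simp
  next
    case (Suc n)
    have "syn_equiv L (P @ wpow g n) ((P @ g) @ wpow g n)" by (rule se_appL[OF P[folded g_def]])
    then show ?case using Suc se_trans by (simp add: wpow_Suc)
  qed
  have "syn_equiv L u ((P @ e) @ g @ R0)" unfolding u e_def g_def[symmetric] by (rule se_appL[OF Pn])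
  also have "syn_equiv L ((P @ e) @ g @ R0) (P @ (g @ R0) @ e)"
    using se_appR[OF centralD'[OF ce, of "g @ R0"], of P] by simp
  finally have ue: "syn_equiv L u (u @ e)" unfolding u g_def by simp
  have ea: "syn_equiv L (e @ replicate w a) e" unfolding e_def g_def by (rule absorb) simp
  have "syn_equiv L (u @ replicate w a) ((u @ e) @ replicate w a)" by (rule se_appL[OF ue])
  also have "syn_equiv L ((u @ e) @ replicate w a) (u @ e)" using se_appR[OF ea, of u] by simp
  also have "syn_equiv L (u @ e) u" by (rule se_sym[OF ue])
  finally show ?thesis .
qed

lemma gather:
  "syn_equiv L (v @ replicate w a) (erase {a} v @ replicate (count_list v a + w) a)"
proof (induction v)
  case Nil then show ?case by simp
next
  case (Cons c v)
  show ?case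
  proof (cases "c = a")
    case False
    then show ?thesis using se_appR[OF Cons, of "[c]"] by (simp add: erase_Cons)
  next
    case True
    define E where "E = erase {a} v"
    define n where "n = count_list v a"
    have "syn_equiv L ((a # v) @ replicate w a) ([a] @ E @ replicate n a @ replicate w a)"
      using se_appR[OF Cons, of "[a]"] unfolding E_def n_def by (simp add: replicate_add)
    also have "syn_equiv L ([a] @ E @ replicate n a @ replicate w a) ([a] @ replicate w a @ E @ replicate n a)"
      using se_appR[OF centralD[OF cen_rep, of "E @ replicate n a"], of "[a]"] by simp
    also have "[a] @ replicate w a @ E @ replicate n a = wpow [a] (w+1) @ (E @ replicate n a)"
      by (simp add: rep_wpow wpow_Suc)
    also have "syn_equiv L (wpow [a] (w+1) @ (E @ replicate n a)) ((E @ replicate n a) @ wpow [a] (w+1))"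
      by (rule centralD'[OF cen1])
    also have "(E @ replicate n a) @ wpow [a] (w+1) = erase {a} (a # v) @ replicate (count_list (a # v) a + w) a"
      using True unfolding E_def n_def by (simp add: erase_Cons rep_wpow[symmetric] replicate_add rep_move)
    finally show ?thesis using True by simp
  qed
qed

definition Blk :: "'a list \<Rightarrow> 'a list \<Rightarrow> 'a list" where
  "Blk x ts = concat (map (\<lambda>a. replicate (count_list x a + w) a) ts)"

lemma NF:
  assumes "distinct ts" "\<forall>a\<in>set ts. syn_equiv L (v @ replicate w a) v"
  shows "syn_equiv L v (erase (set ts) v @ Blk v ts)"
  using assms
proof (induction ts)
  case Nil then show ?case by (simp add: Blk_def erase_def)
next
  case (Cons a ts)
  define S where "S = set ts"
  have aS: "a \<notin> S" using Cons unfolding S_def by simp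
  have "syn_equiv L v (v @ replicate w a)" using Cons.prems by (simp add: se_sym)
  also have "syn_equiv L (v @ replicate w a) ((erase S v @ Blk v ts) @ replicate w a)"
    using Cons unfolding S_def by (intro se_appL) simp
  also have "syn_equiv L ((erase S v @ Blk v ts) @ replicate w a) (erase S v @ replicate w a @ Blk v ts)"
    using se_appR[OF centralD[OF cen_rep, of "Blk v ts"], of "erase S v"] by simp
  also have "syn_equiv L (erase S v @ replicate w a @ Blk v ts)
      (erase {a} (erase S v) @ replicate (count_list (erase S v) a + w) a @ Blk v ts)"
    using se_appL[OF gather, of "erase S v" a "Blk v ts"] by simp
  also have "erase {a} (erase S v) @ replicate (count_list (erase S v) a + w) a @ Blk v ts
     = erase (set (a # ts)) v @ Blk v (a # ts)"
    using aS unfolding S_def by (simp add: erase_erase count_erase Blk_def)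
  finally show ?case .
qed

lemma Blk_cong:
  assumes "\<forall>a\<in>set ts. syn_equiv L (replicate (count_list x a + w) a) (replicate (count_list y a + w) a)"
  shows "syn_equiv L (Blk x ts) (Blk y ts)"
  using assms by (induction ts) (auto simp: Blk_def intro: se_app)

end



definition Bc :: "('a::finite) list set \<Rightarrow> nat \<Rightarrow> bool" where
  "Bc L p \<longleftrightarrow> (\<forall>u. let T = {a. \<not> neutral L a \<and> count_list u a \<ge> p} in
            T = {} \<or> (erase T u \<in> Cond L T \<longleftrightarrow> u \<in> L))"

definition Cc :: "('a::finite) list set \<Rightarrow> nat \<Rightarrow> bool" where
  "Cc L p \<longleftrightarrow> (\<forall>u v. let T = {a. \<not> neutral L a \<and> count_list u a \<ge> p} in
            v \<in> L \<longrightarrow> T \<noteq> {} \<longrightarrow> factor (erase T v) (erase T u) \<longrightarrow> u \<in> L)"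

lemma count_rep[simp]: "count_list (replicate n b) a = (if b = a then n else 0)"
  by (induction n) auto

lemma factor_refl: "factor x x"
  unfolding factor_def by (metis append.left_neutral append_Nil2)

lemma erase_idem: "erase T (erase T u) = erase T u"
  by (simp add: erase_erase)

lemma BC: "Bc L p \<Longrightarrow> Cc L p"
  unfolding Cc_def Let_def
proof (intro allI impI)
  fix u v
  assume B: "Bc L p"
  define T where "T = {a. \<not> neutral L a \<and> count_list u a \<ge> p}"
  assume "v \<in> L" "T \<noteq> {}" "factor (erase T v) (erase T u)"
  then have "erase T u \<in> Cond L T" unfolding Cond_def by (auto simp: erase_idem)
  moreover have "T = {} \<or> (erase T u \<in> Cond L T \<longleftrightarrow> u \<in> L)"
    using B unfolding Bc_def Let_def T_def by blast
  ultimately show "u \<in> L" using \<open>T \<noteq> {}\<close> by blast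
qed

lemma CB: "Cc L p \<Longrightarrow> Bc L p"
  unfolding Bc_def Let_def
proof (intro allI)
  fix u
  assume C: "Cc L p"
  define T where "T = {a. \<not> neutral L a \<and> count_list u a \<ge> p}"
  have C': "v \<in> L \<Longrightarrow> T \<noteq> {} \<Longrightarrow> factor (erase T v) (erase T u) \<Longrightarrow> u \<in> L" for v
    using C unfolding Cc_def Let_def T_def by blast
  have "T = {} \<or> (erase T u \<in> Cond L T \<longleftrightarrow> u \<in> L)"
  proof (cases "T = {}")
    case False
    have "erase T u \<in> Cond L T \<Longrightarrow> u \<in> L"
      unfolding Cond_def using C' False by (auto simp: erase_idem)
    moreover have "u \<in> L \<Longrightarrow> erase T u \<in> Cond L T"
      unfolding Cond_def using factor_refl by (auto simp: erase_idem)
    ultimately show ?thesis by blast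
  qed simp
  then show "T = {} \<or> (erase T u \<in> Cond L T \<longleftrightarrow> u \<in> L)" .
qed

lemma swap_gen:
  assumes C: "Cc L p" and cnt: "\<forall>c. count_list w1 c = count_list w2 c"
    and T: "T = {a. \<not> neutral L a \<and> p \<le> count_list w1 a}"
    and er: "erase ({e. neutral L e} \<union> T) w1 = erase ({e. neutral L e} \<union> T) w2"
    and alt: "T \<noteq> {} \<or> erase {e. neutral L e} w1 = erase {e. neutral L e} w2"
    and w1: "w1 \<in> L"
  shows "w2 \<in> L"
proof -
  let ?N = "{e. neutral L e}"
  have v: "erase ?N w1 \<in> L" using w1 neutral_erase0 by blast
  show ?thesis
  proof (cases "erase ?N w1 = erase ?N w2")
    case True then show ?thesis using v neutral_erase0 by metis
  next
    case False
    then have Tne: "T \<noteq> {}" using alt by blast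
    have TT: "{a. \<not> neutral L a \<and> p \<le> count_list (erase ?N w2) a} = T"
      unfolding T using cnt count_erase[of _ ?N] by auto
    have "factor (erase T (erase ?N w1)) (erase T (erase ?N w2))"
      using er by (simp add: erase_erase Un_commute factor_refl)
    then have "erase ?N w2 \<in> L"
      using C[unfolded Cc_def Let_def, rule_format, of "erase ?N w1" "erase ?N w2"] TT Tne v by simp
    then show ?thesis using neutral_erase0 by blast
  qed
qed

lemma erase_Nil_iff: "erase S u = [] \<longleftrightarrow> set u \<subseteq> S"
  by (auto simp: erase_def filter_empty_conv)

lemma CA:
  assumes reg: "regular L" and C: "Cc L p"
  shows "(\<forall>x y. syn_equiv L (y @ wpow x (syn_omega L + 1)) (wpow x (syn_omega L + 1) @ y))
          \<and> (\<forall>x y z a. \<not> neutral L a \<longrightarrow> y \<in> L \<longrightarrow> x @ y @ z @ replicate (syn_omega L) a \<in> L)"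
proof -
  define w where "w = syn_omega L"
  have wpos: "0 < w" and idem: "\<And>x. syn_equiv L (wpow x w @ wpow x w) (wpow x w)"
    using omega_props[OF reg] unfolding w_def by auto
  have pw: "syn_equiv L (wpow x ((p+1)*w)) (wpow x w)" for x
    using wpow_idem_gen[OF idem[of x], of "p+1"] wpow_mult[of x w "p+1"] by (simp add: mult.commute)
  have pwp: "p < (p+1) * w"
  proof -
    have "p \<le> p * w" using wpos by simp
    moreover have "(p+1)*w = w + p*w" by simp
    ultimately show ?thesis using wpos by linarith
  qed
  have part2: "x @ y @ z @ replicate w a \<in> L" if na: "\<not> neutral L a" and y: "y \<in> L" for x y z a
  proof -
    define u where "u = x @ y @ z @ replicate ((p+1)*w) a"
    define T where "T = {a. \<not> neutral L a \<and> count_list u a \<ge> p}"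
    have "count_list u a \<ge> (p+1)*w" unfolding u_def by simp
    then have "a \<in> T" unfolding T_def using na pwp by simp
    then have Tne: "T \<noteq> {}" by blast
    have "factor (erase T y) (erase T u)"
      unfolding factor_def u_def by auto
    then have uL: "u \<in> L"
      using C[unfolded Cc_def Let_def, rule_format, of y u] y Tne unfolding T_def by blast
    have "syn_equiv L u (x @ y @ z @ replicate w a)"
      unfolding u_def using se_appR[OF pw[of "[a]"], of "x @ y @ z"] by (simp add: rep_wpow)
    then show ?thesis using uL se_mem by blast
  qed
  have part1: "syn_equiv L (y @ wpow x (w + 1)) (wpow x (w + 1) @ y)" for x y
  proof -
    let ?N = "{e. neutral L e}"
    define Y where "Y = x @ wpow x ((p+1)*w)"
    have XY: "syn_equiv L (wpow x (w+1)) Y"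
      unfolding Y_def using se_appR[OF se_sym[OF pw[of x]], of x] by (simp add: wpow_Suc)
    have setY: "neutral L c \<or> p \<le> count_list Y c" if "c \<in> set Y" for c
    proof -
      have "c \<in> set x" using that unfolding Y_def by (auto simp: set_wpow0 split: if_splits)
      then have "1 \<le> count_list x c" by (metis count_list_0_iff less_one not_le)
      then have "(p+1)*w \<le> count_list Y c" unfolding Y_def count_list_append count_wpow
        by (metis le_add2 mult.right_neutral mult_le_mono2 order_trans)
      then show ?thesis using pwp by simp
    qed
    have sub: "set Y \<subseteq> ?N \<union> {a. \<not> neutral L a \<and> p \<le> count_list (s1 @ Y @ s2) a}" for s1 s2
      using setY by fastforce
    have alt: "{a. \<not> neutral L a \<and> p \<le> count_list (s1 @ Y @ s2) a} \<noteq> {} \<or> erase ?N Y = []" for s1 s2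
    proof (cases "set Y \<subseteq> ?N")
      case True then show ?thesis by (simp add: erase_Nil_iff)
    next
      case False
      then obtain c where "c \<in> set Y" "\<not> neutral L c" by blast
      then show ?thesis using setY[of c] by auto
    qed
    have key: "s @ y @ Y @ t \<in> L \<Longrightarrow> s @ Y @ y @ t \<in> L"
      "s @ Y @ y @ t \<in> L \<Longrightarrow> s @ y @ Y @ t \<in> L" for s t
    proof -
      assume h: "s @ y @ Y @ t \<in> L"
      define T where "T = {a. \<not> neutral L a \<and> p \<le> count_list (s @ y @ Y @ t) a}"
      have eY: "erase (?N \<union> T) Y = []"
        using sub[of "s @ y" t] unfolding T_def erase_Nil_iff by simp
      show "s @ Y @ y @ t \<in> L"
      proof (rule swap_gen[OF C _ T_def _ _ h])
        show "erase (?N \<union> T) (s @ y @ Y @ t) = erase (?N \<union> T) (s @ Y @ y @ t)" using eY by simp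
        show "T \<noteq> {} \<or> erase ?N (s @ y @ Y @ t) = erase ?N (s @ Y @ y @ t)"
          using alt[of "s @ y" t] unfolding T_def by auto
      qed simp
    next
      assume h: "s @ Y @ y @ t \<in> L"
      define T where "T = {a. \<not> neutral L a \<and> p \<le> count_list (s @ Y @ y @ t) a}"
      have eY: "erase (?N \<union> T) Y = []"
        using sub[of s "y @ t"] unfolding T_def erase_Nil_iff by simp
      show "s @ y @ Y @ t \<in> L"
      proof (rule swap_gen[OF C _ T_def _ _ h])
        show "erase (?N \<union> T) (s @ Y @ y @ t) = erase (?N \<union> T) (s @ y @ Y @ t)" using eY by simp
        show "T \<noteq> {} \<or> erase ?N (s @ Y @ y @ t) = erase ?N (s @ y @ Y @ t)"
          using alt[of s "y @ t"] unfolding T_def by auto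
      qed simp
    qed
    show ?thesis unfolding syn_equiv_def
    proof (intro allI)
      fix s t
      have 1: "s @ (y @ wpow x (w + 1)) @ t \<in> L \<longleftrightarrow> s @ y @ Y @ t \<in> L"
        using se_mem[OF se_cong[OF XY, of "s @ y" t]] by simp
      have 2: "s @ (wpow x (w + 1) @ y) @ t \<in> L \<longleftrightarrow> s @ Y @ y @ t \<in> L"
        using se_mem[OF se_cong[OF XY, of s "y @ t"]] by simp
      show "s @ (y @ wpow x (w + 1)) @ t \<in> L \<longleftrightarrow> s @ (wpow x (w + 1) @ y) @ t \<in> L"
        using 1 2 key by blast
    qed
  qed
  show ?thesis using part1 part2 unfolding w_def by blast
qed

lemma count_concat_rep:
  "distinct ts \<Longrightarrow> a \<in> set ts \<Longrightarrow> count_list (concat (map (\<lambda>b. replicate (h b) b) ts)) a = h a"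
proof (induction ts)
  case Nil then show ?case by simp
next
  case (Cons b ts)
  show ?case
  proof (cases "b = a")
    case True
    then have "a \<notin> set (concat (map (\<lambda>b. replicate (h b) b) ts))" using Cons.prems
      by (auto split: if_splits)
    then show ?thesis using True by simp
  next
    case False then show ?thesis using Cons by simp
  qed
qed

lemma AC:
  assumes reg: "regular L"
    and A1: "\<forall>x y. syn_equiv L (y @ wpow x (syn_omega L + 1)) (wpow x (syn_omega L + 1) @ y)"
    and A2: "\<forall>x y z a. \<not> neutral L a \<longrightarrow> y \<in> L \<longrightarrow> x @ y @ z @ replicate (syn_omega L) a \<in> L"
  shows "\<exists>p. Cc L p"
proof -
  obtain Q q0 dl Fa where D: "dfa Q q0 dl Fa L" using regular_dfa[OF reg] by blast
  interpret D: dfa Q q0 dl Fa L by (rule D)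
  define w where "w = syn_omega L"
  have wpos: "0 < w" using omega_props[OF reg] unfolding w_def by auto
  interpret alg L w
    using omega_props[OF reg] A1 unfolding w_def by unfold_locales auto
  have A2': "\<not> neutral L a \<Longrightarrow> y \<in> L \<Longrightarrow> x @ y @ z @ replicate w a \<in> L" for x y z a
    using A2 unfolding w_def by blast
  define p where "p = card D.Fs + 1"
  have main: "u \<in> L" if vL: "v \<in> L" and Tne: "T \<noteq> {}" and fac: "factor (erase T v) (erase T u)"
    and T: "T = {a. \<not> neutral L a \<and> count_list u a \<ge> p}" for u v T
  proof -
    have "finite T" by simp
    then obtain ts where ts: "set ts = T" "distinct ts" using finite_distinct_list by blast
    have uabs: "\<forall>a\<in>set ts. syn_equiv L (u @ replicate w a) u"
    proof
      fix a assume "a \<in> set ts"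
      then have "card D.Fs < count_list u a" using ts T unfolding p_def by auto
      then obtain P k R where "u = P @ (a # k) @ R" "syn_equiv L P (P @ a # k)"
        using D.pump by blast
      then show "syn_equiv L (u @ replicate w a) u" by (rule absorb_pump)
    qed
    have NFu: "syn_equiv L u (erase T u @ Blk u ts)" using NF[OF ts(2) uabs] ts by simp
    obtain al be where ab: "erase T u = al @ erase T v @ be"
      using fac unfolding factor_def by blast
    have "set (erase T u) \<inter> T = {}" by (auto simp: set_erase)
    then have alT: "set al \<inter> T = {}" and beT: "set be \<inter> T = {}" using ab by auto
    obtain a0 where a0: "a0 \<in> T" using Tne by blast
    have a0n: "\<not> neutral L a0" using a0 T by simp
    define y1 where "y1 = al @ v @ be @ replicate w a0"
    have y1L: "y1 \<in> L" unfolding y1_def using A2'[OF a0n vL] by simp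
    define r where "r a = count_list u a + (w - 1) * count_list v a" for a
    define Bl where "Bl xs = concat (map (\<lambda>a. replicate (r a + w) a) xs)" for xs
    have blk: "set xs \<subseteq> T \<Longrightarrow> y \<in> L \<Longrightarrow> y @ Bl xs \<in> L" for xs y
    proof (induction xs arbitrary: y)
      case Nil then show ?case by (simp add: Bl_def)
    next
      case (Cons a xs)
      have "\<not> neutral L a" using Cons.prems T by auto
      then have "[] @ y @ replicate (r a) a @ replicate w a \<in> L" using A2' Cons.prems by blast
      then have "y @ replicate (r a + w) a \<in> L" by (simp add: replicate_add)
      moreover have "set xs \<subseteq> T" using Cons.prems(1) by simp
      ultimately have "(y @ replicate (r a + w) a) @ Bl xs \<in> L" using Cons.IH by blast
      then show ?case by (simp add: Bl_def)
    qed
    define W where "W = y1 @ Bl ts"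
    have WL: "W \<in> L" unfolding W_def using blk[OF _ y1L] ts by simp
    have Wabs: "\<forall>a\<in>set ts. syn_equiv L (W @ replicate w a) W"
    proof
      fix a assume "a \<in> set ts"
      then obtain t1 t2 where t12: "ts = t1 @ a # t2" by (meson split_list)
      define X where "X = y1 @ Bl t1 @ replicate (r a) a"
      define Z where "Z = Bl t2"
      define R where "R = replicate w a"
      have WXZ: "W = X @ R @ Z" unfolding W_def X_def Z_def R_def t12 Bl_def
        by (simp add: replicate_add)
      have "syn_equiv L ((X @ R @ Z) @ R) (X @ R @ (R @ Z))"
        using se_appR[OF centralD[OF cen_rep, of Z], of "X @ R"] unfolding R_def by simp
      also have "syn_equiv L (X @ R @ (R @ Z)) (X @ R @ Z)"
        using se_cong[OF idem_rep[of a], of X Z] unfolding R_def by simp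
      finally show "syn_equiv L (W @ replicate w a) W" unfolding WXZ R_def .
    qed
    have NFW: "syn_equiv L W (erase T W @ Blk W ts)" using NF[OF ts(2) Wabs] ts by simp
    have setBl: "set (Bl ts) \<subseteq> T" unfolding Bl_def using ts by auto
    have e1: "erase T (replicate w a0) = []" using a0 by (simp add: erase_Nil_iff set_replicate_conv_if)
    have e2: "erase T (Bl ts) = []" using setBl by (simp add: erase_Nil_iff)
    have e3: "erase T al = al" "erase T be = be" using alT beT by (simp_all add: erase_id)
    have eW: "erase T W = erase T u"
      unfolding W_def y1_def ab using e1 e2 e3 by simp
    have cntW: "count_list W a + w = count_list u a + w + w * (count_list v a + 1 + (if a0 = a then 1 else 0))"
      if "a \<in> set ts" for a
    proof -
      have "a \<notin> set al" "a \<notin> set be" using alT beT that ts by auto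
      then have "count_list W a = count_list v a + (if a0 = a then w else 0) + (r a + w)"
        unfolding W_def y1_def Bl_def using count_concat_rep[OF ts(2) that, of "\<lambda>a. r a + w"]
        by simp
      moreover have "count_list v a + (w - 1) * count_list v a = w * count_list v a"
        using wpos by (cases w) auto
      ultimately show ?thesis unfolding r_def by (cases "a0 = a") (simp_all add: add_mult_distrib2)
    qed
    have BB: "syn_equiv L (Blk u ts) (Blk W ts)"
    proof (rule Blk_cong, intro ballI)
      fix a assume "a \<in> set ts"
      show "syn_equiv L (replicate (count_list u a + w) a) (replicate (count_list W a + w) a)"
        unfolding cntW[OF \<open>a \<in> set ts\<close>] by (rule se_sym, rule rep_shift)
    qed
    have "syn_equiv L u (erase T u @ Blk u ts)" by (rule NFu)
    also have "syn_equiv L (erase T u @ Blk u ts) (erase T W @ Blk W ts)"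
      unfolding eW by (rule se_appR[OF BB])
    also have "syn_equiv L (erase T W @ Blk W ts) W" by (rule se_sym[OF NFW])
    finally show "u \<in> L" using WL se_mem by blast
  qed
  have "Cc L p" unfolding Cc_def Let_def
  proof (intro allI impI)
    fix u v
    assume "v \<in> L" "{a. \<not> neutral L a \<and> p \<le> count_list u a} \<noteq> {}"
      "factor (erase {a. \<not> neutral L a \<and> p \<le> count_list u a} v) (erase {a. \<not> neutral L a \<and> p \<le> count_list u a} u)"
    then show "u \<in> L" by (rule main[OF _ _ _ refl])
  qed
  then show ?thesis by blast
qed

theorem proposition5p5:
  fixes L :: "('a::finite) list set"
  assumes "regular L"
  shows "(((\<forall>x y. syn_equiv L (y @ wpow x (syn_omega L + 1)) (wpow x (syn_omega L + 1) @ y))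
          \<and> (\<forall>x y z a. \<not> neutral L a \<longrightarrow> y \<in> L \<longrightarrow> x @ y @ z @ replicate (syn_omega L) a \<in> L))
     \<longleftrightarrow>
         (\<exists>p::nat. \<forall>u. let T = {a. \<not> neutral L a \<and> count_list u a \<ge> p} in
            T = {} \<or> (erase T u \<in> Cond L T \<longleftrightarrow> u \<in> L))) \<and>
         ((\<exists>p::nat. \<forall>u. let T = {a. \<not> neutral L a \<and> count_list u a \<ge> p} in
            T = {} \<or> (erase T u \<in> Cond L T \<longleftrightarrow> u \<in> L))
     \<longleftrightarrow>
         (\<exists>p::nat. \<forall>u v. let T = {a. \<not> neutral L a \<and> count_list u a \<ge> p} in
            v \<in> L \<longrightarrow> T \<noteq> {} \<longrightarrow> factor (erase T v) (erase T u) \<longrightarrow> u \<in> L))"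
proof -
  let ?A = "(\<forall>x y. syn_equiv L (y @ wpow x (syn_omega L + 1)) (wpow x (syn_omega L + 1) @ y))
          \<and> (\<forall>x y z a. \<not> neutral L a \<longrightarrow> y \<in> L \<longrightarrow> x @ y @ z @ replicate (syn_omega L) a \<in> L)"
  have 2: "(\<exists>p. Bc L p) \<longleftrightarrow> (\<exists>p. Cc L p)" using BC CB by blast
  have 1: "?A \<longleftrightarrow> (\<exists>p. Bc L p)"
  proof
    assume "?A"
    then have "\<exists>p. Cc L p" using AC[OF assms] by blast
    then show "\<exists>p. Bc L p" using 2 by blast
  next
    assume "\<exists>p. Bc L p"
    then obtain p where "Cc L p" using BC by blast
    then show "?A" using CA[OF assms] by blast
  qed
  show ?thesis using 1 2 unfolding Bc_def Cc_def by blast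
qed

end
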